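(* For any complex numbers $a,b,\alpha,\beta$ with $\beta a-\alpha b\neq0$ and any natural number $n\ge1$, \[ \sum_{r=0}^{\lfloor n/2\rfloor}\Psi\left(\begin{array}{cc|c} a & b & n \\ \alpha & \beta & r \end{array}\right)=\Psi(a-\alpha,b-\beta,n),\qquad \sum_{r=0}^{\lfloor (n-1)/2\rfloor}\Phi\left(\begin{array}{cc|c} a & b & n \\ \alpha & \beta & r \end{array}\right)=\Phi(a-\alpha,b-\beta,n). \]
   Context: $\delta(m)=1$ for $m$ odd, $0$ for $m$ even; $\lfloor\cdot\rfloor$ is the floor. $\Psi(a,b,n)$, $\Phi(a,b,n)$ are defined by $\Psi(a,b,0)=2$, $\Psi(a,b,1)=1$, $\Psi(a,b,n+1)=(2a-b)^{\delta(n)}\Psi(a,b,n)-a\Psi(a,b,n-1)$ and $\Phi(a,b,0)=0$, $\Phi(a,b,1)=1$, $\Phi(a,b,n+1)=(2a-b)^{\delta(n+1)}\Phi(a,b,n)-a\Phi(a,b,n-1)$. For $n\ge1$ and numbers with $\beta a-\alpha b\ne0$, $\Psi\left(\begin{array}{cc|c} a & b & n \\ \alpha & \beta & r \end{array}\right)$ ($0\le r\le\lfloor n/2\rfloor$) and $\Phi\left(\begin{array}{cc|c} a & b & n \\ \alpha & \beta & r \end{array}\right)$ ($0\le r\le\lfloor (n-1)/2\rfloor$) are the unique numbers such that, identically in $x,y$, $(\beta a-\alpha b)^{\lfloor n/2\rfloor}\frac{x^n+y^n}{(x+y)^{\delta(n)}}=\sum_{r}\Psi\left(\begin{array}{cc|c}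 a & b & n \\ \alpha & \beta & r \end{array}\right)(\alpha x^2+\beta xy+\alpha y^2)^{\lfloor n/2\rfloor-r}(ax^2+bxy+ay^2)^r$ and $(\beta a-\alpha b)^{\lfloor (n-1)/2\rfloor}\frac{x^n-y^n}{(x-y)(x+y)^{\delta(n-1)}}=\sum_{r}\Phi\left(\begin{array}{cc|c} a & b & n \\ \alpha & \beta & r \end{array}\right)(\alpha x^2+\beta xy+\alpha y^2)^{\lfloor (n-1)/2\rfloor-r}(ax^2+bxy+ay^2)^r$. *)

theory Defs
  imports Complex_Main
begin

definition delta :: "nat \<Rightarrow> nat" where
  "delta m = (if odd m then 1 else 0)"

fun PsiS :: "complex \<Rightarrow> complex \<Rightarrow> nat \<Rightarrow> complex" where
  "PsiS a b 0 = 2"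
| "PsiS a b (Suc 0) = 1"
| "PsiS a b (Suc (Suc m)) =
     (2*a - b) ^ delta (Suc m) * PsiS a b (Suc m) - a * PsiS a b m"

fun PhiS :: "complex \<Rightarrow> complex \<Rightarrow> nat \<Rightarrow> complex" where
  "PhiS a b 0 = 0"
| "PhiS a b (Suc 0) = 1"
| "PhiS a b (Suc (Suc m)) =
     (2*a - b) ^ delta (Suc (Suc m)) * PhiS a b (Suc m) - a * PhiS a b m"

text \<open>The coefficients Psi(a b n | alpha beta r), for 0 \<le> r \<le> n div 2, are the unique
numbers making the stated identity hold identically in x, y (the identity is required
wherever the left-hand quotient is defined, i.e. x + y \<noteq> 0; the coefficients are
extended by 0 for r beyond the range so that THE picks a unique function).\<close>

definition PsiC :: "complex \<Rightarrow> complex \<Rightarrow> complex \<Rightarrow> complex \<Rightarrow> nat \<Rightarrow> nat \<Rightarrow> complex" where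
  "PsiC a b \<alpha> \<beta> n = (THE c. (\<forall>r. n div 2 < r \<longrightarrow> c r = 0) \<and>
     (\<forall>x y::complex. x + y \<noteq> 0 \<longrightarrow>
        (\<beta>*a - \<alpha>*b) ^ (n div 2) * ((x^n + y^n) / (x + y) ^ delta n) =
        (\<Sum>r\<le>n div 2. c r * (\<alpha>*x^2 + \<beta>*x*y + \<alpha>*y^2) ^ (n div 2 - r)
                          * (a*x^2 + b*x*y + a*y^2) ^ r)))"

definition PhiC :: "complex \<Rightarrow> complex \<Rightarrow> complex \<Rightarrow> complex \<Rightarrow> nat \<Rightarrow> nat \<Rightarrow> complex" where
  "PhiC a b \<alpha> \<beta> n = (THE c. (\<forall>r. (n - 1) div 2 < r \<longrightarrow> c r = 0) \<and>
     (\<forall>x y::complex. x - y \<noteq> 0 \<longrightarrow> x + y \<noteq> 0 \<longrightarrow>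
        (\<beta>*a - \<alpha>*b) ^ ((n - 1) div 2) * ((x^n - y^n) / ((x - y) * (x + y) ^ delta (n - 1))) =
        (\<Sum>r\<le>(n - 1) div 2. c r * (\<alpha>*x^2 + \<beta>*x*y + \<alpha>*y^2) ^ ((n - 1) div 2 - r)
                          * (a*x^2 + b*x*y + a*y^2) ^ r)))"

end

theory Submission
  imports Defs
begin

lemma ind2: "P 0 \<Longrightarrow> P (Suc 0) \<Longrightarrow> (\<And>m. P m \<Longrightarrow> P (Suc m) \<Longrightarrow> P (Suc (Suc m))) \<Longrightarrow> P (n::nat)"
proof (induction n rule: less_induct)
  case (less n)
  then show ?case
    by (cases n; cases "n - 1") (auto simp: less_Suc_eq)
qed

lemma delta_simps: "delta (Suc m) = 1 - delta m" "delta m \<le> 1" "delta 0 = 0"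
  by (auto simp: delta_def)

lemma L1: "PsiS (x*y) (-(x^2+y^2)) n * (x+y)^delta n = x^n + y^n"
proof (induction n rule: ind2)
  case 1 then show ?case by (simp add: delta_def)
next
  case 2 then show ?case by (simp add: delta_def)
next
  case (3 m)
  have e: "(2*(x*y) - (-(x^2+y^2))) = (x+y)^2" by (simp add: power2_eq_square algebra_simps)
  show ?case
  proof (cases "odd m")
    case True
    hence d: "delta m = 1" "delta (Suc m) = 0" "delta (Suc (Suc m)) = 1" by (auto simp: delta_def)
    have "PsiS (x*y) (-(x^2+y^2)) (Suc (Suc m)) * (x+y)^delta (Suc (Suc m))
      = (x+y) * (PsiS (x*y) (-(x^2+y^2)) (Suc m) * (x+y)^delta (Suc m))
        - x*y*(PsiS (x*y) (-(x^2+y^2)) m * (x+y)^delta m)"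
      by (simp add: d algebra_simps)
    also have "\<dots> = x^Suc (Suc m) + y^Suc(Suc m)" by (simp only: 3) (simp add: algebra_simps)
    finally show ?thesis .
  next
    case False
    hence d: "delta m = 0" "delta (Suc m) = 1" "delta (Suc (Suc m)) = 0" by (auto simp: delta_def)
    have "PsiS (x*y) (-(x^2+y^2)) (Suc (Suc m)) * (x+y)^delta (Suc (Suc m))
      = (x+y) * (PsiS (x*y) (-(x^2+y^2)) (Suc m) * (x+y)^delta (Suc m))
        - x*y*(PsiS (x*y) (-(x^2+y^2)) m * (x+y)^delta m)"
      using e by (simp add: d algebra_simps power2_eq_square)
    also have "\<dots> = x^Suc (Suc m) + y^Suc(Suc m)" by (simp only: 3) (simp add: algebra_simps)
    finally show ?thesis .
  qed
qed

lemma L2: "PhiS (x*y) (-(x^2+y^2)) n * (x-y) * (x+y)^delta (n-1) = x^n - y^n"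
proof (induction n rule: ind2)
  case 1 then show ?case by (simp add: delta_def)
next
  case 2 then show ?case by (simp add: delta_def)
next
  case (3 m)
  have e: "(2*(x*y) - (-(x^2+y^2))) = (x+y)^2" by (simp add: power2_eq_square algebra_simps)
  show ?case
  proof (cases "m")
    case 0 then show ?thesis by (simp add: delta_def power2_eq_square algebra_simps)
  next
    case (Suc k)
  show ?thesis
  proof (cases "odd m")
    case True
    hence d: "delta (m - Suc 0) = 0" "delta m = 1" "delta (Suc m) = 0" "delta (Suc (Suc m)) = 1" by (auto simp: delta_def Suc)
    have "PhiS (x*y) (-(x^2+y^2)) (Suc (Suc m)) * (x-y) * (x+y)^delta (Suc (Suc m) - 1)
      = (x+y) * (PhiS (x*y) (-(x^2+y^2)) (Suc m) * (x-y) * (x+y)^delta (Suc m - 1))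
        - x*y*(PhiS (x*y) (-(x^2+y^2)) m * (x-y) * (x+y)^delta (m-1))"
      using e by (simp add: d algebra_simps power2_eq_square)
    also have "\<dots> = x^Suc (Suc m) - y^Suc(Suc m)" by (simp only: 3) (simp add: algebra_simps)
    finally show ?thesis .
  next
    case False
    hence d: "delta (m - Suc 0) = 1" "delta m = 0" "delta (Suc m) = 1" "delta (Suc (Suc m)) = 0" by (auto simp: delta_def Suc)
    have "PhiS (x*y) (-(x^2+y^2)) (Suc (Suc m)) * (x-y) * (x+y)^delta (Suc (Suc m) - 1)
      = (x+y) * (PhiS (x*y) (-(x^2+y^2)) (Suc m) * (x-y) * (x+y)^delta (Suc m - 1))
        - x*y*(PhiS (x*y) (-(x^2+y^2)) m * (x-y) * (x+y)^delta (m-1))"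
      by (simp add: d algebra_simps)
    also have "\<dots> = x^Suc (Suc m) - y^Suc(Suc m)" by (simp only: 3) (simp add: algebra_simps)
    finally show ?thesis .
  qed
  qed
qed


definition hom :: "nat \<Rightarrow> (complex \<Rightarrow> complex \<Rightarrow> complex) \<Rightarrow> bool" where
  "hom m f \<longleftrightarrow> (\<exists>c. \<forall>P Q. f P Q = (\<Sum>r\<le>m. c r * P^(m-r) * Q^r))"

lemma hom_zero: "hom m (\<lambda>_ _. 0)"
  unfolding hom_def by (rule exI[of _ "\<lambda>_. 0"]) simp

lemma hom_const: "hom 0 (\<lambda>_ _. k)"
  unfolding hom_def by (rule exI[of _ "\<lambda>_. k"]) simp

lemma hom_add: "hom m f \<Longrightarrow> hom m g \<Longrightarrow> hom m (\<lambda>P Q. f P Q + g P Q)"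
  unfolding hom_def
proof (elim exE)
  fix c d assume c: "\<forall>P Q. f P Q = (\<Sum>r\<le>m. c r * P^(m-r) * Q^r)"
    and d: "\<forall>P Q. g P Q = (\<Sum>r\<le>m. d r * P^(m-r) * Q^r)"
  show "\<exists>e. \<forall>P Q. f P Q + g P Q = (\<Sum>r\<le>m. e r * P^(m-r) * Q^r)"
    by (rule exI[of _ "\<lambda>r. c r + d r"]) (simp add: c d sum.distrib algebra_simps)
qed

lemma hom_smult: "hom m f \<Longrightarrow> hom m (\<lambda>P Q. k * f P Q)"
  unfolding hom_def
proof (elim exE)
  fix c assume c: "\<forall>P Q. f P Q = (\<Sum>r\<le>m. c r * P^(m-r) * Q^r)"
  show "\<exists>e. \<forall>P Q. k * f P Q = (\<Sum>r\<le>m. e r * P^(m-r) * Q^r)"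
    by (rule exI[of _ "\<lambda>r. k * c r"]) (simp add: c sum_distrib_left algebra_simps)
qed

lemma hom_diff: "hom m f \<Longrightarrow> hom m g \<Longrightarrow> hom m (\<lambda>P Q. f P Q - g P Q)"
  using hom_add[of m f "\<lambda>P Q. (-1) * g P Q"] hom_smult[of m g "-1"] by simp

lemma hom_P: "hom m f \<Longrightarrow> hom (Suc m) (\<lambda>P Q. P * f P Q)"
  unfolding hom_def
proof (elim exE)
  fix c assume c: "\<forall>P Q. f P Q = (\<Sum>r\<le>m. c r * P^(m-r) * Q^r)"
  show "\<exists>e. \<forall>P Q. P * f P Q = (\<Sum>r\<le>Suc m. e r * P^(Suc m-r) * Q^r)"
  proof (rule exI[of _ "\<lambda>r. if r \<le> m then c r else 0"], intro allI)
    fix P Q :: complex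
    have "(\<Sum>r\<le>Suc m. (if r \<le> m then c r else 0) * P^(Suc m-r) * Q^r)
        = (\<Sum>r\<le>m. c r * P^(Suc m-r) * Q^r)" by simp
    also have "\<dots> = (\<Sum>r\<le>m. P * (c r * P^(m-r) * Q^r))"
      by (rule sum.cong) (auto simp: Suc_diff_le)
    finally show "P * f P Q = (\<Sum>r\<le>Suc m. (if r \<le> m then c r else 0) * P^(Suc m-r) * Q^r)"
      by (simp add: c sum_distrib_left)
  qed
qed

lemma hom_Q: "hom m f \<Longrightarrow> hom (Suc m) (\<lambda>P Q. Q * f P Q)"
  unfolding hom_def
proof (elim exE)
  fix c assume c: "\<forall>P Q. f P Q = (\<Sum>r\<le>m. c r * P^(m-r) * Q^r)"
  show "\<exists>e. \<forall>P Q. Q * f P Q = (\<Sum>r\<le>Suc m. e r * P^(Suc m-r) * Q^r)"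
  proof (rule exI[of _ "\<lambda>r. if r = 0 then 0 else c (r - 1)"], intro allI)
    fix P Q :: complex
    have "(\<Sum>r\<le>Suc m. (if r = 0 then 0 else c (r - 1)) * P^(Suc m-r) * Q^r)
        = (\<Sum>r\<le>m. c r * P^(Suc m - Suc r) * Q^Suc r)"
      by (subst sum.atMost_Suc_shift) simp
    also have "\<dots> = (\<Sum>r\<le>m. Q * (c r * P^(m-r) * Q^r))"
      by (rule sum.cong) (auto simp: algebra_simps)
    finally show "Q * f P Q = (\<Sum>r\<le>Suc m. (if r = 0 then 0 else c (r - 1)) * P^(Suc m-r) * Q^r)"
      by (simp add: c sum_distrib_left)
  qed
qed

lemma hom_lin: "hom m f \<Longrightarrow> hom (Suc m) (\<lambda>P Q. (k1 * P + k2 * Q) * f P Q)"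
proof -
  assume h: "hom m f"
  have "hom (Suc m) (\<lambda>P Q. k1 * (P * f P Q) + k2 * (Q * f P Q))"
    by (intro hom_add hom_smult hom_P hom_Q h)
  then show ?thesis by (simp add: algebra_simps)
qed

lemma hom_Psi:
  fixes k1 k2 l1 l2 :: complex
  shows "hom (n div 2) (\<lambda>P Q. PsiS (k1*P + k2*Q) (l1*P + l2*Q) n)"
proof (induction n rule: ind2)
  case 1 then show ?case using hom_const by simp
next
  case 2 then show ?case using hom_const by simp
next
  case (3 m)
  have e: "\<And>P Q. 2 * (k1*P + k2*Q) - (l1*P + l2*Q) = (2*k1 - l1) * P + (2*k2 - l2) * Q"
    by (simp add: algebra_simps)
  show ?case
  proof (cases "even m")
    case True
    hence d: "delta (Suc m) = 1" and m: "Suc m div 2 = m div 2" "Suc (Suc m) div 2 = Suc (m div 2)"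
      by (auto simp: delta_def)
    have "hom (Suc (m div 2)) (\<lambda>P Q. ((2*k1 - l1) * P + (2*k2 - l2) * Q) * PsiS (k1*P + k2*Q) (l1*P + l2*Q) (Suc m)
       - (k1*P + k2*Q) * PsiS (k1*P + k2*Q) (l1*P + l2*Q) m)"
      using 3 m by (intro hom_diff hom_lin) auto
    then show ?thesis by (simp only: PsiS.simps d m e power_one_right)
  next
    case False
    hence d: "delta (Suc m) = 0" and m: "Suc m div 2 = Suc (m div 2)" "Suc (Suc m) div 2 = Suc (m div 2)"
      by (auto simp: delta_def elim: oddE)
    have "hom (Suc (m div 2)) (\<lambda>P Q. PsiS (k1*P + k2*Q) (l1*P + l2*Q) (Suc m)
       - (k1*P + k2*Q) * PsiS (k1*P + k2*Q) (l1*P + l2*Q) m)"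
      using 3 m by (intro hom_diff hom_lin) auto
    then show ?thesis by (simp only: PsiS.simps d m power_0 mult_1)
  qed
qed

lemma hom_Phi:
  fixes k1 k2 l1 l2 :: complex
  shows "hom ((n - 1) div 2) (\<lambda>P Q. PhiS (k1*P + k2*Q) (l1*P + l2*Q) n)"
proof (induction n rule: ind2)
  case 1 then show ?case using hom_zero by simp
next
  case 2 then show ?case using hom_const by simp
next
  case (3 m)
  have e: "\<And>P Q. 2 * (k1*P + k2*Q) - (l1*P + l2*Q) = (2*k1 - l1) * P + (2*k2 - l2) * Q"
    by (simp add: algebra_simps)
  show ?case
  proof (cases "m = 0")
    case True then show ?thesis using hom_const[of 1] by (simp add: delta_def)
  next
    case m0: False
  show ?thesis
  proof (cases "odd m")
    case True
    hence d: "delta (Suc (Suc m)) = 1" and m: "(Suc m - 1) div 2 = m div 2" "(Suc (Suc m) - 1) div 2 = Suc (m div 2)"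
       "(m - 1) div 2 = m div 2"
      by (auto simp: delta_def elim: oddE)
    have "hom (Suc (m div 2)) (\<lambda>P Q. ((2*k1 - l1) * P + (2*k2 - l2) * Q) * PhiS (k1*P + k2*Q) (l1*P + l2*Q) (Suc m)
       - (k1*P + k2*Q) * PhiS (k1*P + k2*Q) (l1*P + l2*Q) m)"
      using 3 m by (intro hom_diff hom_lin) auto
    then show ?thesis by (simp only: PhiS.simps d m e power_one_right)
  next
    case False
    hence d: "delta (Suc (Suc m)) = 0" and m: "(Suc m - 1) div 2 = Suc ((m - 1) div 2)" "(Suc (Suc m) - 1) div 2 = Suc ((m - 1) div 2)"
      using m0 by (auto simp: delta_def elim!: evenE)
    have "hom (Suc ((m - 1) div 2)) (\<lambda>P Q. PhiS (k1*P + k2*Q) (l1*P + l2*Q) (Suc m)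
       - (k1*P + k2*Q) * PhiS (k1*P + k2*Q) (l1*P + l2*Q) m)"
      using 3 m by (intro hom_diff hom_lin) auto
    then show ?thesis by (simp only: PhiS.simps d m power_0 mult_1)
  qed
  qed
qed


lemma lin_fin:
  fixes p q :: complex
  assumes "p \<noteq> 0 \<or> q \<noteq> 0"
  shows "finite {t. p + q * t = 0}"
proof (cases "q = 0")
  case True then show ?thesis using assms by simp
next
  case False
  have "{t. p + q * t = 0} \<subseteq> {-p/q}" using False by (auto simp: field_simps add_eq_0_iff)
  then show ?thesis using finite_subset by blast
qed

lemma uniq:
  fixes a b \<alpha> \<beta> :: complex and d :: "nat \<Rightarrow> complex"
  assumes Dz: "\<alpha>*b - \<beta>*a \<noteq> 0"
    and H: "\<forall>x y. x+y \<noteq> 0 \<longrightarrow> x-y \<noteq> 0 \<longrightarrow>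
        (\<Sum>r\<le>m. d r * (\<alpha>*x^2+\<beta>*x*y+\<alpha>*y^2)^(m-r) * (a*x^2+b*x*y+a*y^2)^r) = 0"
  shows "\<forall>r\<le>m. d r = 0"
proof -
  define \<Delta> where "\<Delta> = \<alpha>*b - \<beta>*a"
  have D: "\<Delta> \<noteq> 0" using Dz by (simp add: \<Delta>_def)
  have f1: "finite {t. (b - 2*a) + (2*\<alpha> - \<beta>) * t = 0}"
  proof (rule lin_fin)
    show "b - 2*a \<noteq> 0 \<or> 2*\<alpha> - \<beta> \<noteq> 0"
    proof (rule ccontr)
      assume "\<not> ?thesis"
      then have "b = 2*a" "\<beta> = 2*\<alpha>" by auto
      then show False using Dz by (simp add: algebra_simps)
    qed
  qed
  have f2: "finite {t. (b + 2*a) + (-(2*\<alpha> + \<beta>)) * t = 0}"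
  proof (rule lin_fin)
    show "b + 2*a \<noteq> 0 \<or> -(2*\<alpha> + \<beta>) \<noteq> 0"
    proof (rule ccontr)
      assume "\<not> ?thesis"
      then have "b = -2*a" "\<beta> = -2*\<alpha>" by (auto simp: add_eq_0_iff)
      then show False using Dz by (simp add: algebra_simps)
    qed
  qed
  have sub: "UNIV - ({t. (b - 2*a) + (2*\<alpha> - \<beta>) * t = 0} \<union> {t. (b + 2*a) + (-(2*\<alpha> + \<beta>)) * t = 0})
      \<subseteq> {t. (\<Sum>r\<le>m. d r * t^r) = 0}"
  proof
    fix t assume "t \<in> UNIV - ({t. (b - 2*a) + (2*\<alpha> - \<beta>) * t = 0} \<union> {t. (b + 2*a) + (-(2*\<alpha> + \<beta>)) * t = 0})"
    then have t1: "(b - 2*a) + (2*\<alpha> - \<beta>) * t \<noteq> 0" and t2: "(b + 2*a) + (-(2*\<alpha> + \<beta>)) * t \<noteq> 0" by auto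
    define u where "u = (b - \<beta>*t)/\<Delta>"
    define p where "p = (\<alpha>*t - a)/\<Delta>"
    have "u + 2*p = ((b - 2*a) + (2*\<alpha> - \<beta>) * t)/\<Delta>" using D unfolding u_def p_def
      by (simp add: field_simps algebra_simps)
    then have u1: "u + 2*p \<noteq> 0" using t1 D by simp
    have "u - 2*p = ((b + 2*a) + (-(2*\<alpha> + \<beta>)) * t)/\<Delta>" using D unfolding u_def p_def
      by (simp add: field_simps algebra_simps)
    then have u2: "u - 2*p \<noteq> 0" using t2 D by simp
    define s where "s = csqrt (u + 2*p)"
    define w where "w = csqrt (u - 2*p)"
    have s2: "s^2 = u + 2*p" and w2: "w^2 = u - 2*p" by (simp_all add: s_def w_def)
    have s0: "s \<noteq> 0" using s2 u1 by auto
    have w0: "w \<noteq> 0" using w2 u2 by auto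
    define x where "x = (s + w)/2"
    define y where "y = (s - w)/2"
    have xy1: "x + y \<noteq> 0" using s0 by (simp add: x_def y_def field_simps)
    have xy2: "x - y \<noteq> 0" using w0 by (simp add: x_def y_def field_simps)
    have sq: "x^2 + y^2 = u" unfolding x_def y_def
      using s2 w2 by (simp add: power2_eq_square field_simps; simp add: algebra_simps)
    have pr: "x*y = p" unfolding x_def y_def
      using s2 w2 by (simp add: power2_eq_square field_simps; simp add: algebra_simps)
    have P1: "\<alpha>*x^2+\<beta>*x*y+\<alpha>*y^2 = 1"
    proof -
      have "\<alpha>*x^2+\<beta>*x*y+\<alpha>*y^2 = \<alpha>*(x^2+y^2) + \<beta>*(x*y)" by (simp add: algebra_simps)
      also have "\<dots> = (\<alpha>*b - \<beta>*a)/\<Delta>" unfolding sq pr u_def p_def using D by (simp add: field_simps; simp add: algebra_simps)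
      also have "\<dots> = 1" using D by (simp add: \<Delta>_def)
      finally show ?thesis .
    qed
    have Qt: "a*x^2+b*x*y+a*y^2 = t"
    proof -
      have "a*x^2+b*x*y+a*y^2 = a*(x^2+y^2) + b*(x*y)" by (simp add: algebra_simps)
      also have "\<dots> = t*\<Delta>/\<Delta>" unfolding sq pr u_def p_def using D by (simp add: field_simps; simp add: algebra_simps \<Delta>_def)
      also have "\<dots> = t" using D by simp
      finally show ?thesis .
    qed
    show "t \<in> {t. (\<Sum>r\<le>m. d r * t^r) = 0}"
      using H[rule_format, OF xy1 xy2] unfolding P1 Qt by simp
  qed
  have "infinite (UNIV - ({t. (b - 2*a) + (2*\<alpha> - \<beta>) * t = 0} \<union> {t. (b + 2*a) + (-(2*\<alpha> + \<beta>)) * t = 0}))"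
    using f1 f2 infinite_UNIV_char_0[where 'a=complex] by (meson Diff_infinite_finite finite_UnI)
  then have "infinite {t. (\<Sum>r\<le>m. d r * t^r) = 0}" using sub finite_subset by blast
  then show ?thesis using polyfun_finite_roots[of d m] by auto
qed


lemma generic:
  fixes a b \<alpha> \<beta> :: complex and F T :: "complex \<Rightarrow> complex \<Rightarrow> complex"
    and C :: "complex \<Rightarrow> complex \<Rightarrow> bool" and Pr :: "(nat \<Rightarrow> complex) \<Rightarrow> bool"
  assumes Dz: "\<beta>*a - \<alpha>*b \<noteq> 0"
   and CC: "\<And>x y. x+y\<noteq>0 \<Longrightarrow> x-y\<noteq>0 \<Longrightarrow> C x y"
   and G: "\<And>P Q. F P Q = (\<Sum>r\<le>m. c r * P^(m-r) * Q^r)"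
   and T: "\<And>x y. C x y \<Longrightarrow> T x y = F (\<alpha>*x^2+\<beta>*x*y+\<alpha>*y^2) (a*x^2+b*x*y+a*y^2)"
   and Pr: "\<And>c. Pr c \<longleftrightarrow> (\<forall>r. m<r \<longrightarrow> c r = 0) \<and> (\<forall>x y. C x y \<longrightarrow> (\<beta>*a-\<alpha>*b)^m * T x y
        = (\<Sum>r\<le>m. c r * (\<alpha>*x^2+\<beta>*x*y+\<alpha>*y^2)^(m-r) * (a*x^2+b*x*y+a*y^2)^r))"
  shows "(THE c. Pr c) = (\<lambda>r. if r \<le> m then (\<beta>*a-\<alpha>*b)^m * c r else 0)"
proof (rule the_equality)
  define D where "D = \<beta>*a-\<alpha>*b"
  define c' where "c' = (\<lambda>r. if r \<le> m then D^m * c r else 0)"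
  have key: "D^m * T x y = (\<Sum>r\<le>m. c' r * (\<alpha>*x^2+\<beta>*x*y+\<alpha>*y^2)^(m-r) * (a*x^2+b*x*y+a*y^2)^r)"
    if "C x y" for x y
  proof -
    have "D^m * T x y = D^m * (\<Sum>r\<le>m. c r * (\<alpha>*x^2+\<beta>*x*y+\<alpha>*y^2)^(m-r) * (a*x^2+b*x*y+a*y^2)^r)"
      using T[OF that] G by simp
    also have "\<dots> = (\<Sum>r\<le>m. c' r * (\<alpha>*x^2+\<beta>*x*y+\<alpha>*y^2)^(m-r) * (a*x^2+b*x*y+a*y^2)^r)"
      unfolding sum_distrib_left by (rule sum.cong) (auto simp: c'_def)
    finally show ?thesis .
  qed
  show "Pr (\<lambda>r. if r \<le> m then (\<beta>*a-\<alpha>*b)^m * c r else 0)"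
    unfolding Pr using key unfolding c'_def D_def by auto
  fix c2 assume "Pr c2"
  then have c20: "\<forall>r. m<r \<longrightarrow> c2 r = 0" and c2: "\<And>x y. C x y \<Longrightarrow> D^m * T x y
        = (\<Sum>r\<le>m. c2 r * (\<alpha>*x^2+\<beta>*x*y+\<alpha>*y^2)^(m-r) * (a*x^2+b*x*y+a*y^2)^r)"
    unfolding Pr D_def by auto
  have "\<forall>r\<le>m. c2 r - c' r = 0"
  proof (rule uniq[of \<alpha> b \<beta> a])
    show "\<alpha>*b - \<beta>*a \<noteq> 0" using Dz by (simp add: algebra_simps)
    show "\<forall>x y. x+y \<noteq> 0 \<longrightarrow> x-y \<noteq> 0 \<longrightarrow>
        (\<Sum>r\<le>m. (c2 r - c' r) * (\<alpha>*x^2+\<beta>*x*y+\<alpha>*y^2)^(m-r) * (a*x^2+b*x*y+a*y^2)^r) = 0"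
    proof (intro allI impI)
      fix x y :: complex assume "x+y \<noteq> 0" "x-y\<noteq>0"
      then have "C x y" by (rule CC)
      then show "(\<Sum>r\<le>m. (c2 r - c' r) * (\<alpha>*x^2+\<beta>*x*y+\<alpha>*y^2)^(m-r) * (a*x^2+b*x*y+a*y^2)^r) = 0"
        using c2 key by (simp add: left_diff_distrib sum_subtractf)
    qed
  qed
  then show "c2 = (\<lambda>r. if r \<le> m then (\<beta>*a-\<alpha>*b)^m * c r else 0)"
    using c20 unfolding c'_def D_def by (auto simp: not_le)
qed

theorem theorem10p3:
  fixes a b \<alpha> \<beta> :: complex and n :: nat
  assumes "\<beta>*a - \<alpha>*b \<noteq> 0" and "n \<ge> 1"
  shows "(\<Sum>r\<le>n div 2. PsiC a b \<alpha> \<beta> n r) = PsiS (a - \<alpha>) (b - \<beta>) n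
       \<and> (\<Sum>r\<le>(n - 1) div 2. PhiC a b \<alpha> \<beta> n r) = PhiS (a - \<alpha>) (b - \<beta>) n"
proof
  define D where "D = \<beta>*a - \<alpha>*b"
  define \<Delta> where "\<Delta> = \<alpha>*b - \<beta>*a"
  have D0: "D \<noteq> 0" using assms(1) by (simp add: D_def)
  have Dl: "\<Delta> = - D" by (simp add: D_def \<Delta>_def)
  have L0: "\<Delta> \<noteq> 0" using D0 Dl by simp
  define k1 where "k1 = -a/\<Delta>"
  define k2 where "k2 = \<alpha>/\<Delta>"
  define l1 where "l1 = -b/\<Delta>"
  define l2 where "l2 = \<beta>/\<Delta>"
  have kk: "k1 * (\<alpha>*x^2+\<beta>*x*y+\<alpha>*y^2) + k2 * (a*x^2+b*x*y+a*y^2) = x*y" for x y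
    unfolding k1_def k2_def using L0 by (simp add: field_simps; simp add: algebra_simps \<Delta>_def)
  have ll: "l1 * (\<alpha>*x^2+\<beta>*x*y+\<alpha>*y^2) + l2 * (a*x^2+b*x*y+a*y^2) = -(x^2+y^2)" for x y
    unfolding l1_def l2_def using L0 by (simp add: field_simps; simp add: algebra_simps \<Delta>_def)
  have kD: "k1 * D + k2 * D = a - \<alpha>"
    unfolding k1_def k2_def using L0 Dl by (simp add: field_simps; simp add: algebra_simps)
  have lD: "l1 * D + l2 * D = b - \<beta>"
    unfolding l1_def l2_def using L0 Dl by (simp add: field_simps; simp add: algebra_simps)
  have DD: "(\<Sum>r\<le>m. c r * D^(m-r) * D^r) = D^m * (\<Sum>r\<le>m. c r)" for m c
    unfolding sum_distrib_left by (rule sum.cong) (auto simp: power_add[symmetric])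
  obtain c where c: "\<And>P Q. PsiS (k1*P + k2*Q) (l1*P + l2*Q) n = (\<Sum>r\<le>n div 2. c r * P^(n div 2-r) * Q^r)"
    using hom_Psi[of n k1 k2 l1 l2] unfolding hom_def by blast
  have "PsiC a b \<alpha> \<beta> n = (\<lambda>r. if r \<le> n div 2 then D^(n div 2) * c r else 0)"
    unfolding PsiC_def D_def
  proof (rule generic[where F = "\<lambda>P Q. PsiS (k1*P + k2*Q) (l1*P + l2*Q) n"
        and C = "\<lambda>x y. x + y \<noteq> 0" and T = "\<lambda>x y. (x^n + y^n) / (x + y) ^ delta n"])
    show "\<beta>*a - \<alpha>*b \<noteq> 0" by fact
    fix x y :: complex
    show "x+y\<noteq>0 \<Longrightarrow> x-y\<noteq>0 \<Longrightarrow> x + y \<noteq> 0" by simp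
    assume "x + y \<noteq> 0"
    then show "(x^n + y^n) / (x + y) ^ delta n = PsiS (k1*(\<alpha>*x^2+\<beta>*x*y+\<alpha>*y^2) + k2*(a*x^2+b*x*y+a*y^2))
       (l1*(\<alpha>*x^2+\<beta>*x*y+\<alpha>*y^2) + l2*(a*x^2+b*x*y+a*y^2)) n"
      unfolding kk ll using L1[of x y n] by (simp add: divide_eq_eq)
  qed (rule c, simp)
  then have "(\<Sum>r\<le>n div 2. PsiC a b \<alpha> \<beta> n r) = D^(n div 2) * (\<Sum>r\<le>n div 2. c r)"
    by (simp add: sum_distrib_left)
  also have "\<dots> = PsiS (a - \<alpha>) (b - \<beta>) n"
    using c[of D D] unfolding kD lD DD by simp
  finally show "(\<Sum>r\<le>n div 2. PsiC a b \<alpha> \<beta> n r) = PsiS (a - \<alpha>) (b - \<beta>) n" .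
next
  define D where "D = \<beta>*a - \<alpha>*b"
  define \<Delta> where "\<Delta> = \<alpha>*b - \<beta>*a"
  have D0: "D \<noteq> 0" using assms(1) by (simp add: D_def)
  have Dl: "\<Delta> = - D" by (simp add: D_def \<Delta>_def)
  have L0: "\<Delta> \<noteq> 0" using D0 Dl by simp
  define k1 where "k1 = -a/\<Delta>"
  define k2 where "k2 = \<alpha>/\<Delta>"
  define l1 where "l1 = -b/\<Delta>"
  define l2 where "l2 = \<beta>/\<Delta>"
  have kk: "k1 * (\<alpha>*x^2+\<beta>*x*y+\<alpha>*y^2) + k2 * (a*x^2+b*x*y+a*y^2) = x*y" for x y
    unfolding k1_def k2_def using L0 by (simp add: field_simps; simp add: algebra_simps \<Delta>_def)
  have ll: "l1 * (\<alpha>*x^2+\<beta>*x*y+\<alpha>*y^2) + l2 * (a*x^2+b*x*y+a*y^2) = -(x^2+y^2)" for x y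
    unfolding l1_def l2_def using L0 by (simp add: field_simps; simp add: algebra_simps \<Delta>_def)
  have kD: "k1 * D + k2 * D = a - \<alpha>"
    unfolding k1_def k2_def using L0 Dl by (simp add: field_simps; simp add: algebra_simps)
  have lD: "l1 * D + l2 * D = b - \<beta>"
    unfolding l1_def l2_def using L0 Dl by (simp add: field_simps; simp add: algebra_simps)
  have DD: "(\<Sum>r\<le>m. c r * D^(m-r) * D^r) = D^m * (\<Sum>r\<le>m. c r)" for m c
    unfolding sum_distrib_left by (rule sum.cong) (auto simp: power_add[symmetric])
  obtain c where c: "\<And>P Q. PhiS (k1*P + k2*Q) (l1*P + l2*Q) n = (\<Sum>r\<le>(n - 1) div 2. c r * P^((n - 1) div 2-r) * Q^r)"
    using hom_Phi[of n k1 k2 l1 l2] unfolding hom_def by blast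
  have "PhiC a b \<alpha> \<beta> n = (\<lambda>r. if r \<le> (n - 1) div 2 then D^((n - 1) div 2) * c r else 0)"
    unfolding PhiC_def D_def
  proof (rule generic[where F = "\<lambda>P Q. PhiS (k1*P + k2*Q) (l1*P + l2*Q) n"
        and C = "\<lambda>x y. x - y \<noteq> 0 \<and> x + y \<noteq> 0" and T = "\<lambda>x y. (x^n - y^n) / ((x - y) * (x + y) ^ delta (n - 1))"])
    show "\<beta>*a - \<alpha>*b \<noteq> 0" by fact
    fix x y :: complex
    show "x+y\<noteq>0 \<Longrightarrow> x-y\<noteq>0 \<Longrightarrow> x - y \<noteq> 0 \<and> x + y \<noteq> 0" by simp
    assume "x - y \<noteq> 0 \<and> x + y \<noteq> 0"
    then show "(x^n - y^n) / ((x - y) * (x + y) ^ delta (n - 1)) = PhiS (k1*(\<alpha>*x^2+\<beta>*x*y+\<alpha>*y^2) + k2*(a*x^2+b*x*y+a*y^2))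
       (l1*(\<alpha>*x^2+\<beta>*x*y+\<alpha>*y^2) + l2*(a*x^2+b*x*y+a*y^2)) n"
      unfolding kk ll using L2[of x y n] by (simp add: divide_eq_eq mult.assoc)
  next
    fix c2
    show "(\<forall>r. (n - 1) div 2 < r \<longrightarrow> c2 r = 0) \<and>
     (\<forall>x y::complex. x - y \<noteq> 0 \<longrightarrow> x + y \<noteq> 0 \<longrightarrow>
        (\<beta>*a - \<alpha>*b) ^ ((n - 1) div 2) * ((x^n - y^n) / ((x - y) * (x + y) ^ delta (n - 1))) =
        (\<Sum>r\<le>(n - 1) div 2. c2 r * (\<alpha>*x^2 + \<beta>*x*y + \<alpha>*y^2) ^ ((n - 1) div 2 - r)
                          * (a*x^2 + b*x*y + a*y^2) ^ r))
      \<longleftrightarrow> (\<forall>r. (n - 1) div 2 < r \<longrightarrow> c2 r = 0) \<and>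
     (\<forall>x y. x - y \<noteq> 0 \<and> x + y \<noteq> 0 \<longrightarrow>
        (\<beta>*a - \<alpha>*b) ^ ((n - 1) div 2) * ((x^n - y^n) / ((x - y) * (x + y) ^ delta (n - 1))) =
        (\<Sum>r\<le>(n - 1) div 2. c2 r * (\<alpha>*x^2 + \<beta>*x*y + \<alpha>*y^2) ^ ((n - 1) div 2 - r)
                          * (a*x^2 + b*x*y + a*y^2) ^ r))"
      by blast
  qed (rule c)
  then have "(\<Sum>r\<le>(n - 1) div 2. PhiC a b \<alpha> \<beta> n r) = D^((n - 1) div 2) * (\<Sum>r\<le>(n - 1) div 2. c r)"
    by (simp add: sum_distrib_left)
  also have "\<dots> = PhiS (a - \<alpha>) (b - \<beta>) n"
    using c[of D D] unfolding kD lD DD by simp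
  finally show "(\<Sum>r\<le>(n - 1) div 2. PhiC a b \<alpha> \<beta> n r) = PhiS (a - \<alpha>) (b - \<beta>) n" .
qed

end
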